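(* Let $k\geq 1$ and let $\zeta_1,\dots,\zeta_k\in(0,1)$ be real numbers such that $1,\zeta_1,\dots,\zeta_k$ are linearly independent over $\mathbb{Q}$. With the sequences $b_n^{(s)}$, $b_n^{\prime(s)}$ defined in the context, $$\widehat{\omega}\geq\max\left\{\sup_{s\ge2}\liminf_{n\to\infty}\max_{1\le j\le n}\frac{b^{(s)}_{j+1}-b^{(s)}_j-1}{b^{(s)}_{n+1}},\ \sup_{s\ge2}\liminf_{n\to\infty}\max_{1\le j\le n}\frac{b^{\prime(s)}_{j+1}-b^{\prime(s)}_j-1}{b^{\prime(s)}_{n+1}}\right\}.$$
   Context: For $X>0$ let $\omega_1(X)$ be the supremum of all real $\nu$ such that $|x|\leq X$, $|\zeta_i x-y_i|\leq X^{-\nu}$ ($1\le i\le k$) has a nonzero solution $(x,y_1,\dots,y_k)\in\mathbb{Z}^{k+1}$; $\widehat\omega=\liminf_{X\to\infty}\omega_1(X)$. For an integer $s\ge2$, let $a_1^{i,(s)}<a_2^{i,(s)}<\cdots$ be the positions (after the point) of the nonzero digits in the base-$s$ expansion of $\zeta_i$, and $a_1^{\prime i,(s)}<a_2^{\prime i,(s)}<\cdots$ those of $1-\zeta_i$. Let $(b_n^{(s)})_{n\ge1}$ be the increasing enumeration of $\{a_n^{i,(s)}:1\le i\le k, n\ge1\}$ and $(b_n^{\prime(s)})_{n\ge1}$ the increasing enumeration of $\{a_n^{\prime i,(s)}:1\le i\le k,n\ge1\}$. *)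

theory Defs
  imports "HOL-Analysis.Analysis" "HOL-Library.Infinite_Set" "HOL-Library.Liminf_Limsup"
begin

definition omega1 :: "nat \<Rightarrow> (nat \<Rightarrow> real) \<Rightarrow> real \<Rightarrow> ereal" where
  "omega1 k \<zeta> X = Sup (ereal ` {\<nu>::real. \<exists>(x::int) (y::nat \<Rightarrow> int).
      (x \<noteq> 0 \<or> (\<exists>i\<in>{1..k}. y i \<noteq> 0)) \<and> \<bar>real_of_int x\<bar> \<le> X \<and>
      (\<forall>i\<in>{1..k}. \<bar>\<zeta> i * real_of_int x - real_of_int (y i)\<bar> \<le> X powr (-\<nu>))})"

definition omega_hat :: "nat \<Rightarrow> (nat \<Rightarrow> real) \<Rightarrow> ereal" where
  "omega_hat k \<zeta> = Liminf at_top (omega1 k \<zeta>)"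

text \<open>n-th digit (n >= 1, after the point) of the base-s expansion of z in (0,1).\<close>
definition digit :: "nat \<Rightarrow> real \<Rightarrow> nat \<Rightarrow> int" where
  "digit s z n = \<lfloor>real s ^ n * z\<rfloor> mod int s"

definition digit_positions :: "nat \<Rightarrow> nat \<Rightarrow> (nat \<Rightarrow> real) \<Rightarrow> nat set" where
  "digit_positions s k f = {n. n \<ge> 1 \<and> (\<exists>i\<in>{1..k}. digit s (f i) n \<noteq> 0)}"

text \<open>1-indexed increasing enumeration b_1 < b_2 < ...\<close>
definition bseq :: "nat \<Rightarrow> nat \<Rightarrow> (nat \<Rightarrow> real) \<Rightarrow> nat \<Rightarrow> nat" where
  "bseq s k f n = enumerate (digit_positions s k f) (n - 1)"

definition gap_quantity :: "nat \<Rightarrow> (nat \<Rightarrow> real) \<Rightarrow> ereal" where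
  "gap_quantity k f = (SUP s\<in>{2..}. Liminf sequentially (\<lambda>n.
      ereal (Max {(real (bseq s k f (j+1)) - real (bseq s k f j) - 1) / real (bseq s k f (n+1))
                 | j. 1 \<le> j \<and> j \<le> n})))"

end

theory Submission imports Defs begin

lemma digit_step:
  assumes "s \<ge> 2"
  shows "\<lfloor>real s ^ Suc q * z\<rfloor> = int s * \<lfloor>real s ^ q * z\<rfloor> + digit s z (Suc q)"
proof -
  define w where "w = real s ^ q * z"
  have e: "real s ^ Suc q * z = real s * w" by (simp add: w_def)
  have "\<lfloor>real s * w\<rfloor> div int s = \<lfloor>w\<rfloor>"
  proof -
    have "\<lfloor>real s * w\<rfloor> div int s = \<lfloor>real_of_int \<lfloor>real s * w\<rfloor> / real s\<rfloor>"
      by (metis floor_divide_of_int_eq of_int_of_nat_eq)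
    also have "\<dots> = \<lfloor>(real s * w) / real s\<rfloor>"
      by (metis floor_divide_real_eq_div floor_of_int of_int_of_nat_eq of_nat_0_le_iff)
    also have "\<dots> = \<lfloor>w\<rfloor>" using assms by simp
    finally show ?thesis .
  qed
  then show ?thesis unfolding e digit_def
    by (metis e w_def div_mult_mod_eq mult.commute)
qed

lemma digits_zero_floor:
  assumes "s \<ge> 2" and "\<forall>p. n < p \<and> p \<le> n + g \<longrightarrow> digit s z p = 0"
  shows "\<lfloor>real s ^ (n + g) * z\<rfloor> = int s ^ g * \<lfloor>real s ^ n * z\<rfloor>"
  using assms(2)
proof (induction g)
  case 0 then show ?case by simp
next
  case (Suc g)
  have "\<lfloor>real s ^ (n + Suc g) * z\<rfloor> = int s * \<lfloor>real s ^ (n + g) * z\<rfloor> + digit s z (Suc (n+g))"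
    using digit_step[OF assms(1), of "n+g" z] by simp
  also have "digit s z (Suc (n+g)) = 0" using Suc.prems by auto
  also have "\<lfloor>real s ^ (n + g) * z\<rfloor> = int s ^ g * \<lfloor>real s ^ n * z\<rfloor>"
    using Suc by auto
  finally show ?case by simp
qed

lemma frac_small:
  assumes "s \<ge> 2" and "\<forall>p. n < p \<and> p \<le> n + g \<longrightarrow> digit s z p = 0"
  shows "(real s ^ n * z - real_of_int \<lfloor>real s ^ n * z\<rfloor>) * real s ^ g < 1"
proof -
  have "(real s ^ n * z - real_of_int \<lfloor>real s ^ n * z\<rfloor>) * real s ^ g
     = real s ^ (n+g) * z - real_of_int \<lfloor>real s ^ (n + g) * z\<rfloor>"
    using digits_zero_floor[OF assms] by (simp add: algebra_simps power_add)
  also have "\<dots> < 1" by linarith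
  finally show ?thesis .
qed

lemma positions_infinite:
  assumes "s \<ge> 2" and "1 \<le> k" and "f 1 \<notin> \<rat>"
  shows "infinite (digit_positions s k f)"
proof
  assume fin: "finite (digit_positions s k f)"
  then obtain N where N: "\<forall>p\<in>digit_positions s k f. p \<le> N"
    using finite_nat_set_iff_bounded_le by blast
  have dz: "\<forall>p. N < p \<and> p \<le> N + g \<longrightarrow> digit s (f 1) p = 0" for g
  proof (intro allI impI)
    fix p assume p: "N < p \<and> p \<le> N + g"
    show "digit s (f 1) p = 0"
    proof (rule ccontr)
      assume "digit s (f 1) p \<noteq> 0"
      then have "p \<in> digit_positions s k f"
        using p assms(2) unfolding digit_positions_def by auto
      then show False using N p by auto
    qed
  qed
  define fr where "fr = real s ^ N * f 1 - real_of_int \<lfloor>real s ^ N * f 1\<rfloor>"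
  have fr0: "fr \<ge> 0" unfolding fr_def by linarith
  have frs: "fr * real s ^ g < 1" for g
    using frac_small[OF assms(1) dz] unfolding fr_def by blast
  have "fr = 0"
  proof (rule ccontr)
    assume "fr \<noteq> 0"
    then have "fr > 0" using fr0 by simp
    obtain g :: nat where g: "1 / fr < real g" using reals_Archimedean2 by blast
    have "g < (2::nat) ^ g" by (rule less_exp)
    then have "real g < 2 ^ g" by (metis of_nat_less_iff of_nat_numeral of_nat_power)
    also have "(2::real) ^ g \<le> real s ^ g" using assms(1) by (intro power_mono) auto
    finally have "1 / fr < real s ^ g" using g by linarith
    then have "1 < fr * real s ^ g" using \<open>fr > 0\<close> by (simp add: field_simps)
    then show False using frs[of g] by simp
  qed
  then have "f 1 = real_of_int \<lfloor>real s ^ N * f 1\<rfloor> / real s ^ N"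
    using assms(1) unfolding fr_def by (simp add: field_simps)
  then have "f 1 \<in> \<rat>" by (metis Rats_divide Rats_of_int Rats_of_nat Rats_power)
  then show False using assms(3) by simp
qed

lemma omega1_sym_sub:
  "{\<nu>::real. \<exists>(x::int) (y::nat \<Rightarrow> int).
      (x \<noteq> 0 \<or> (\<exists>i\<in>{1..k}. y i \<noteq> 0)) \<and> \<bar>real_of_int x\<bar> \<le> X \<and>
      (\<forall>i\<in>{1..k}. \<bar>f i * real_of_int x - real_of_int (y i)\<bar> \<le> X powr (-\<nu>))}
   \<subseteq> {\<nu>::real. \<exists>(x::int) (y::nat \<Rightarrow> int).
      (x \<noteq> 0 \<or> (\<exists>i\<in>{1..k}. y i \<noteq> 0)) \<and> \<bar>real_of_int x\<bar> \<le> X \<and>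
      (\<forall>i\<in>{1..k}. \<bar>(1 - f i) * real_of_int x - real_of_int (y i)\<bar> \<le> X powr (-\<nu>))}"
proof
  fix \<nu> assume "\<nu> \<in> {\<nu>::real. \<exists>(x::int) (y::nat \<Rightarrow> int).
      (x \<noteq> 0 \<or> (\<exists>i\<in>{1..k}. y i \<noteq> 0)) \<and> \<bar>real_of_int x\<bar> \<le> X \<and>
      (\<forall>i\<in>{1..k}. \<bar>f i * real_of_int x - real_of_int (y i)\<bar> \<le> X powr (-\<nu>))}"
  then obtain x y where h: "x \<noteq> 0 \<or> (\<exists>i\<in>{1..k}. y i \<noteq> 0)" "\<bar>real_of_int x\<bar> \<le> X"
     "\<forall>i\<in>{1..k}. \<bar>f i * real_of_int x - real_of_int (y i)\<bar> \<le> X powr (-\<nu>)" by blast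
  have "x \<noteq> 0 \<or> (\<exists>i\<in>{1..k}. x - y i \<noteq> 0)" using h(1) by auto
  moreover have "\<forall>i\<in>{1..k}. \<bar>(1 - f i) * real_of_int x - real_of_int (x - y i)\<bar> \<le> X powr (-\<nu>)"
  proof
    fix i assume "i \<in> {1..k}"
    then have "\<bar>f i * real_of_int x - real_of_int (y i)\<bar> \<le> X powr (-\<nu>)" using h(3) by blast
    moreover have "\<bar>(1 - f i) * real_of_int x - real_of_int (x - y i)\<bar> = \<bar>f i * real_of_int x - real_of_int (y i)\<bar>"
      by (simp add: algebra_simps abs_minus_commute)
    ultimately show "\<bar>(1 - f i) * real_of_int x - real_of_int (x - y i)\<bar> \<le> X powr (-\<nu>)" by simp
  qed
  ultimately show "\<nu> \<in> {\<nu>::real. \<exists>(x::int) (y::nat \<Rightarrow> int).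
      (x \<noteq> 0 \<or> (\<exists>i\<in>{1..k}. y i \<noteq> 0)) \<and> \<bar>real_of_int x\<bar> \<le> X \<and>
      (\<forall>i\<in>{1..k}. \<bar>(1 - f i) * real_of_int x - real_of_int (y i)\<bar> \<le> X powr (-\<nu>))}"
    using h(2) by (intro CollectI exI[of _ x] exI[of _ "\<lambda>i. x - y i"]) auto
qed

lemma omega1_sym: "omega1 k (\<lambda>i. 1 - f i) X = omega1 k f X"
proof -
  have "omega1 k (\<lambda>i. 1 - f i) X \<le> omega1 k f X"
    using omega1_sym_sub[of k X "\<lambda>i. 1 - f i"] unfolding omega1_def
    by (intro Sup_subset_mono image_mono) simp
  moreover have "omega1 k f X \<le> omega1 k (\<lambda>i. 1 - f i) X"
    using omega1_sym_sub[of k X f] unfolding omega1_def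
    by (intro Sup_subset_mono image_mono) simp
  ultimately show ?thesis by simp
qed

lemma per_s:
  assumes s: "s \<ge> 2" and k: "1 \<le> k" and irr: "f 1 \<notin> \<rat>"
  shows "Liminf sequentially (\<lambda>n.
      ereal (Max {(real (bseq s k f (j+1)) - real (bseq s k f j) - 1) / real (bseq s k f (n+1))
                 | j. 1 \<le> j \<and> j \<le> n})) \<le> Liminf at_top (omega1 k f)"
    (is "Liminf sequentially ?G \<le> _")
proof -
  define S where "S = digit_positions s k f"
  have inf: "infinite S" unfolding S_def using positions_infinite[of s k f] s k irr by blast
  define e where "e = enumerate S"
  have b: "bseq s k f j = e (j - 1)" for j unfolding bseq_def e_def S_def by simp
  have emono: "e m < e n \<longleftrightarrow> m < n" for m n unfolding e_def using inf by simp
  have emonol: "e m \<le> e n \<longleftrightarrow> m \<le> n" for m n unfolding e_def using inf by simp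
  have eS: "e m \<in> S" for m unfolding e_def using enumerate_in_set[OF inf] .
  have e1: "e m \<ge> 1" for m using eS[of m] unfolding S_def digit_positions_def by auto
  have ege: "m \<le> e m" for m unfolding e_def using le_enumerate[OF inf] .
  have gap: "p \<notin> S" if "e m < p" "p < e (Suc m)" for m p
  proof
    assume "p \<in> S"
    then obtain q where "enumerate S q = p" using enumerate_Ex[OF inf] by blast
    then have "e q = p" unfolding e_def .
    then show False using that emono[of m q] emono[of q "Suc m"] by auto
  qed
  have s1: "real s \<ge> 2" using s by simp
  have A: "?G n \<le> omega1 k f X" if n: "n \<ge> 1" and X1: "real s ^ e (n-1) \<le> X" and X2: "X \<le> real s ^ e n"
    for n X
  proof -
    define T where "T = {(real (bseq s k f (j+1)) - real (bseq s k f j) - 1) / real (bseq s k f (n+1))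
                 | j. 1 \<le> j \<and> j \<le> n}"
    have T: "T = (\<lambda>j. (real (bseq s k f (j+1)) - real (bseq s k f j) - 1) / real (bseq s k f (n+1))) ` {1..n}"
      unfolding T_def by auto
    have "Max T \<in> T" unfolding T using n by (intro Max_in) auto
    then obtain j where j: "1 \<le> j" "j \<le> n"
      and MT: "Max T = (real (bseq s k f (j+1)) - real (bseq s k f j) - 1) / real (bseq s k f (n+1))"
      unfolding T by auto
    define m where "m = e (j-1)"
    define m' where "m' = e (Suc (j-1))"
    define B where "B = e n"
    have mm': "m < m'" unfolding m_def m'_def using emono by simp
    define g where "g = m' - m - 1"
    define \<nu> where "\<nu> = real g / real B"
    have Bpos: "real B \<ge> 1" unfolding B_def using e1 by simp
    have MT': "Max T = \<nu>" unfolding MT \<nu>_def b g_def m_def m'_def B_def using mm' j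
      by (simp add: of_nat_diff m_def m'_def)
    have \<nu>0: "\<nu> \<ge> 0" unfolding \<nu>_def by simp
    have Xge1: "X \<ge> 1" using X1 s1 by (meson le_trans one_le_power order_trans one_le_numeral)
    have "\<nu> \<in> {\<nu>::real. \<exists>(x::int) (y::nat \<Rightarrow> int).
      (x \<noteq> 0 \<or> (\<exists>i\<in>{1..k}. y i \<noteq> 0)) \<and> \<bar>real_of_int x\<bar> \<le> X \<and>
      (\<forall>i\<in>{1..k}. \<bar>f i * real_of_int x - real_of_int (y i)\<bar> \<le> X powr (-\<nu>))}"
    proof (intro CollectI exI[of _ "int s ^ m"] exI[of _ "\<lambda>i. \<lfloor>real s ^ m * f i\<rfloor>"] conjI)
      show "int s ^ m \<noteq> 0 \<or> (\<exists>i\<in>{1..k}. \<lfloor>real s ^ m * f i\<rfloor> \<noteq> 0)" using s by simp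
      have "e (j-1) \<le> e (n-1)" using emonol j by simp
      then have "real s ^ m \<le> real s ^ e (n-1)" unfolding m_def using s1 by (intro power_increasing) auto
      then show "\<bar>real_of_int (int s ^ m)\<bar> \<le> X" using X1 by simp
      show "\<forall>i\<in>{1..k}. \<bar>f i * real_of_int (int s ^ m) - real_of_int \<lfloor>real s ^ m * f i\<rfloor>\<bar> \<le> X powr - \<nu>"
      proof
        fix i assume i: "i \<in> {1..k}"
        have dz: "\<forall>p. m < p \<and> p \<le> m + g \<longrightarrow> digit s (f i) p = 0"
        proof (intro allI impI)
          fix p assume p: "m < p \<and> p \<le> m + g"
          have "p < m'" using p mm' unfolding g_def by linarith
          then have "p \<notin> S" using gap[of "j-1" p] p unfolding m_def m'_def by auto
          moreover have "p \<ge> 1" using p by auto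
          ultimately show "digit s (f i) p = 0" using i unfolding S_def digit_positions_def by auto
        qed
        have fs: "(real s ^ m * f i - real_of_int \<lfloor>real s ^ m * f i\<rfloor>) * real s ^ g < 1"
          using frac_small[OF s dz] .
        have sgpos: "real s ^ g > 0" using s1 by simp
        have fr: "real s ^ m * f i - real_of_int \<lfloor>real s ^ m * f i\<rfloor> < 1 / real s ^ g"
          using fs sgpos by (simp add: field_simps)
        have "X powr \<nu> \<le> (real s ^ B) powr \<nu>"
          using X2 \<nu>0 Xge1 unfolding B_def by (intro powr_mono2) auto
        also have "(real s ^ B) powr \<nu> = real s powr (real B * \<nu>)"
          using s1 by (simp add: powr_realpow[symmetric] powr_powr)
        also have "real B * \<nu> = real g" unfolding \<nu>_def using Bpos by simp
        also have "real s powr real g = real s ^ g" using s1 by (simp add: powr_realpow)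
        finally have "X powr \<nu> \<le> real s ^ g" .
        then have "1 / real s ^ g \<le> 1 / X powr \<nu>"
          using Xge1 sgpos by (intro divide_left_mono) auto
        also have "1 / X powr \<nu> = X powr (-\<nu>)" by (simp add: powr_minus divide_inverse)
        finally have "real s ^ m * f i - real_of_int \<lfloor>real s ^ m * f i\<rfloor> \<le> X powr (-\<nu>)"
          using fr by simp
        moreover have "real s ^ m * f i - real_of_int \<lfloor>real s ^ m * f i\<rfloor> \<ge> 0" by linarith
        ultimately show "\<bar>f i * real_of_int (int s ^ m) - real_of_int \<lfloor>real s ^ m * f i\<rfloor>\<bar> \<le> X powr - \<nu>"
          by (simp add: mult.commute)
      qed
    qed
    then have "ereal \<nu> \<le> omega1 k f X" unfolding omega1_def by (intro Sup_upper imageI)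
    then show ?thesis using MT' unfolding T_def by simp
  qed
  have B: "\<exists>n\<ge>N. real s ^ e (n-1) \<le> X \<and> X \<le> real s ^ e n"
    if N: "N \<ge> 1" and X: "real s ^ e (N-1) \<le> X" for N X
  proof -
    define P where "P n = (X < real s ^ e (n-1))" for n
    obtain M :: nat where M: "X \<le> real M" using real_arch_simple by blast
    have "M < (2::nat) ^ M" by (rule less_exp)
    then have "real M < 2 ^ M" by (metis of_nat_less_iff of_nat_numeral of_nat_power)
    also have "(2::real) ^ M \<le> real s ^ M" using s1 by (intro power_mono) auto
    also have "real s ^ M \<le> real s ^ e M" using s1 ege by (intro power_increasing) auto
    finally have "real M < real s ^ e M" .
    then have "P (Suc M)" unfolding P_def using M by (simp only: diff_Suc_1)
    define n0 where "n0 = (LEAST n. P n)"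
    have Pn0: "P n0" unfolding n0_def using LeastI_ex \<open>P (Suc M)\<close> by metis
    have nP: "\<not> P n" if "n < n0" for n using not_less_Least that unfolding n0_def by blast
    have "\<not> P N" unfolding P_def using X by simp
    have gt: "n0 > N"
    proof (rule ccontr)
      assume "\<not> N < n0"
      then have "e (n0-1) \<le> e (N-1)" using emonol by simp
      then have "real s ^ e (n0-1) \<le> real s ^ e (N-1)" using s1 by (intro power_increasing) auto
      then show False using Pn0 X unfolding P_def by simp
    qed
    have "\<not> P (n0 - 1)" using nP[of "n0-1"] gt by simp
    then have "real s ^ e (n0 - 1 - 1) \<le> X" unfolding P_def by simp
    moreover have "X \<le> real s ^ e (n0 - 1)" using Pn0 unfolding P_def by simp
    ultimately show ?thesis using gt
      by (intro exI[of _ "n0 - 1"]) (auto simp: Suc_diff_Suc)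
  qed
  show ?thesis
    unfolding le_Liminf_iff
  proof (intro allI impI)
    fix y assume "y < Liminf sequentially ?G"
    then have "eventually (\<lambda>n. ?G n > y) sequentially" by (rule less_LiminfD)
    then obtain N0 where N0: "\<And>n. n \<ge> N0 \<Longrightarrow> ?G n > y" unfolding eventually_sequentially by blast
    define N where "N = max N0 1"
    have "eventually (\<lambda>X. X \<ge> real s ^ e (N-1)) at_top" by (rule eventually_ge_at_top)
    then show "eventually (\<lambda>X. y < omega1 k f X) at_top"
    proof (rule eventually_mono)
      fix X assume "X \<ge> real s ^ e (N-1)"
      then obtain n where n: "n \<ge> N" "real s ^ e (n-1) \<le> X" "X \<le> real s ^ e n"
        using B[of N X] unfolding N_def by auto
      have "y < ?G n" using N0 n(1) unfolding N_def by simp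
      also have "?G n \<le> omega1 k f X" using A[of n X] n unfolding N_def by simp
      finally show "y < omega1 k f X" .
    qed
  qed
qed

lemma gap_le:
  assumes k: "1 \<le> k" and irr: "f 1 \<notin> \<rat>"
  shows "gap_quantity k f \<le> Liminf at_top (omega1 k f)"
  unfolding gap_quantity_def
proof (rule SUP_least)
  fix s :: nat assume "s \<in> {2..}"
  then show "liminf (\<lambda>n. ereal (Max {(real (bseq s k f (j + 1)) - real (bseq s k f j) - 1) /
        real (bseq s k f (n + 1)) | j. 1 \<le> j \<and> j \<le> n})) \<le> Liminf at_top (omega1 k f)"
    using per_s[of s k f] k irr by auto
qed

theorem proposition2p3:
  fixes k :: nat and \<zeta> :: "nat \<Rightarrow> real"
  assumes "k \<ge> 1"
    and "\<forall>i\<in>{1..k}. 0 < \<zeta> i \<and> \<zeta> i < 1"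
    and "\<forall>(c0::real) (c::nat \<Rightarrow> real). c0 \<in> \<rat> \<and> (\<forall>i\<in>{1..k}. c i \<in> \<rat>) \<and>
           c0 + (\<Sum>i=1..k. c i * \<zeta> i) = 0 \<longrightarrow> c0 = 0 \<and> (\<forall>i\<in>{1..k}. c i = 0)"
  shows "omega_hat k \<zeta> \<ge> max (gap_quantity k \<zeta>) (gap_quantity k (\<lambda>i. 1 - \<zeta> i))"
proof -
  have sum1: "(\<Sum>i=1..k. (if i = 1 then (1::real) else 0) * \<zeta> i) = \<zeta> 1"
  proof -
    have "(\<Sum>i=1..k. (if i = 1 then (1::real) else 0) * \<zeta> i) = (\<Sum>i=1..k. if i = 1 then \<zeta> i else 0)"
      by (intro sum.cong) auto
    also have "\<dots> = \<zeta> 1" using assms(1) by (subst sum.delta) auto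
    finally show ?thesis .
  qed
  have irr: "\<zeta> 1 \<notin> \<rat>"
  proof
    assume q: "\<zeta> 1 \<in> \<rat>"
    have "-\<zeta> 1 \<in> \<rat>" using q by simp
    moreover have "-\<zeta> 1 + (\<Sum>i=1..k. (if i = 1 then (1::real) else 0) * \<zeta> i) = 0" using sum1 by simp
    moreover have "\<forall>i\<in>{1..k}. (if i = 1 then (1::real) else 0) \<in> \<rat>" by simp
    ultimately have "- \<zeta> 1 = 0 \<and> (\<forall>i\<in>{1..k}. (if i = 1 then (1::real) else 0) = 0)"
      using spec[OF spec[OF assms(3), of "- \<zeta> 1"], of "\<lambda>i. if i = 1 then (1::real) else 0"] by blast
    then have "\<forall>i\<in>{1..k}. (if i = 1 then (1::real) else 0) = 0" by blast
    moreover have "(1::nat) \<in> {1..k}" using assms(1) by simp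
    ultimately have "(if (1::nat) = 1 then (1::real) else 0) = 0" by blast
    then show False by simp
  qed
  have irr': "1 - \<zeta> 1 \<notin> \<rat>"
  proof
    assume "1 - \<zeta> 1 \<in> \<rat>"
    then have "1 - (1 - \<zeta> 1) \<in> \<rat>" using Rats_1 Rats_diff by blast
    then show False using irr by simp
  qed
  have "gap_quantity k \<zeta> \<le> omega_hat k \<zeta>"
    unfolding omega_hat_def using gap_le[of k \<zeta>] assms(1) irr by blast
  moreover have "gap_quantity k (\<lambda>i. 1 - \<zeta> i) \<le> omega_hat k \<zeta>"
  proof -
    have eq: "omega1 k (\<lambda>i. 1 - \<zeta> i) = omega1 k \<zeta>" by (rule ext) (rule omega1_sym)
    have "gap_quantity k (\<lambda>i. 1 - \<zeta> i) \<le> Liminf at_top (omega1 k (\<lambda>i. 1 - \<zeta> i))"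
      using gap_le[of k "\<lambda>i. 1 - \<zeta> i"] assms(1) irr' by simp
    then show ?thesis unfolding omega_hat_def eq .
  qed
  ultimately show ?thesis by simp
qed

end
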